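(* Let $f(\mathbf{x})=\mathbf{x}^{T}A\mathbf{x}+b^{T}\mathbf{x}+1$ with $A\in\mathbb{R}^{n\times n}$ symmetric, $b\in\mathbb{R}^n$, $A\neq 0$, and suppose $f(\mathbf{x})=\det(I_k+x_1A_1+\dots+x_nA_n)$ for some $k\ge 2$ and Hermitian (or real symmetric) $k\times k$ matrices $A_1,\dots,A_n$. If $A$ is not negative semidefinite, then the spectrahedron $S=\{\mathbf{x}\in\mathbb{R}^n: I_k+\sum_j x_jA_j\succeq 0\}$ contains a full dimensional cone; more precisely, there exists $v\in\mathbb{R}^n$ with $\sum_j v_jA_j\succeq 0$ and $\operatorname{rank}(\sum_j v_jA_j)=2=\deg f$.
   Context: For $f(\mathbf{x})=\det(I+x_1A_1+\dots+x_nA_n)$ of degree $d$ and $S=\{\mathbf{x}: I+\sum_j x_jA_j\succeq 0\}$, the spectrahedron $S$ is said to contain a full dimensional cone if there exists $\mathbf{x}\in\mathbb{R}^n$ such that $L(\mathbf{x}):=x_1A_1+\dots+x_nA_n\succeq 0$ and $\operatorname{rank}L(\mathbf{x})=d$ (equivalently, the half ray $\{\lambda\mathbf{x}:\lambda\ge0\}$ lies in $S$ and $\operatorname{rank}L(\mathbf{x})=d$). *)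

theory Defs
  imports "HOL-Analysis.Analysis"
begin

definition hermitian_mat :: "complex^'k^'k \<Rightarrow> bool" where
  "hermitian_mat M \<longleftrightarrow> (\<forall>i j. M $ i $ j = cnj (M $ j $ i))"

text \<open>Positive semidefinite (Hermitian) matrix: Hermitian and x* M x \<ge> 0 for all complex x.\<close>
definition psd_mat :: "complex^'k^'k \<Rightarrow> bool" where
  "psd_mat M \<longleftrightarrow> hermitian_mat M \<and>
     (\<forall>x::complex^'k. 0 \<le> Re (\<Sum>i\<in>UNIV. \<Sum>j\<in>UNIV. cnj (x $ i) * M $ i $ j * x $ j))"

text \<open>The linear pencil L(x) = x_1 A_1 + ... + x_n A_n.\<close>
definition pencil :: "('n::finite \<Rightarrow> complex^'k^'k) \<Rightarrow> real^'n \<Rightarrow> complex^'k^'k" where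
  "pencil As x = (\<Sum>j\<in>UNIV. (x $ j) *\<^sub>R As j)"

end

theory Submission imports Defs "HOL-Computational_Algebra.Polynomial"
begin

definition cin :: "complex^'k \<Rightarrow> complex^'k \<Rightarrow> complex" where
  "cin x y = (\<Sum>i\<in>UNIV. cnj (x$i) * y$i)"

lemma cin_add_left: "cin (x + y) z = cin x z + cin y z"
  by (simp add: cin_def algebra_simps sum.distrib)
lemma cin_add_right: "cin z (x + y) = cin z x + cin z y"
  by (simp add: cin_def algebra_simps sum.distrib)
lemma cin_diff_left: "cin (x - y) z = cin x z - cin y z"
  by (simp add: cin_def algebra_simps sum_subtractf)
lemma cin_diff_right: "cin z (x - y) = cin z x - cin z y"
  by (simp add: cin_def algebra_simps sum_subtractf)
lemma cin_scale_left: "cin (c *s x) z = cnj c * cin x z"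
  by (simp add: cin_def algebra_simps sum_distrib_left)
lemma cin_scale_right: "cin z (c *s x) = c * cin z x"
  by (simp add: cin_def algebra_simps sum_distrib_left)
lemma cin_cnj: "cnj (cin x y) = cin y x"
  by (simp add: cin_def mult.commute)
lemma cin_self_real: "cin x x = of_real (\<Sum>i\<in>UNIV. (cmod (x$i))^2)"
proof -
  have "\<And>i. cnj (x$i) * x$i = complex_of_real ((cmod (x$i))^2)"
    by (metis complex_norm_square mult.commute of_real_power)
  then show ?thesis unfolding cin_def of_real_sum by (rule sum.cong[OF refl])
qed
lemma cin_self_eq_0: "cin x x = 0 \<longleftrightarrow> x = 0"
proof -
  have "(\<Sum>i\<in>UNIV. (cmod (x$i))^2) = 0 \<longleftrightarrow> (\<forall>i. (cmod (x$i))^2 = 0)"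
    by (simp add: sum_nonneg_eq_0_iff)
  moreover have "cin x x = 0 \<longleftrightarrow> (\<Sum>i\<in>UNIV. (cmod (x$i))^2) = 0"
    unfolding cin_self_real by (simp only: of_real_eq_0_iff)
  ultimately show ?thesis by (simp add: vec_eq_iff)
qed
lemma Re_cin: "Re (cin x y) = x \<bullet> y"
  by (simp add: cin_def inner_vec_def inner_complex_def Re_sum)
lemma cin_self_norm: "cin x x = of_real ((norm x)^2)"
proof -
  have "cin x x = complex_of_real (Re (cin x x))" by (simp add: cin_self_real)
  also have "Re (cin x x) = (norm x)^2" by (simp add: Re_cin power2_norm_eq_inner)
  finally show ?thesis .
qed
lemma cin_0_left[simp]: "cin 0 x = 0" and cin_0_right[simp]: "cin x 0 = 0"
  by (simp_all add: cin_def)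

lemma herm_cin:
  assumes "hermitian_mat M"
  shows "cin x (M *v y) = cin (M *v x) y"
proof -
  have h: "M$i$j = cnj (M$j$i)" for i j using assms unfolding hermitian_mat_def by blast
  have "cin x (M *v y) = (\<Sum>i\<in>UNIV. \<Sum>j\<in>UNIV. cnj (x$i) * M$i$j * y$j)"
    by (simp add: cin_def matrix_vector_mult_def sum_distrib_left mult.assoc)
  also have "\<dots> = (\<Sum>j\<in>UNIV. \<Sum>i\<in>UNIV. cnj (x$i) * M$i$j * y$j)"
    by (rule sum.swap)
  also have "\<dots> = (\<Sum>j\<in>UNIV. \<Sum>i\<in>UNIV. cnj (M$j$i) * cnj (x$i) * y$j)"
    by (intro sum.cong refl) (subst h, simp add: ac_simps)
  also have "\<dots> = cin (M *v x) y"
    by (simp add: cin_def matrix_vector_mult_def sum_distrib_right cnj_sum)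
  finally show ?thesis .
qed

lemma mv_scale: "M *v (c *s x) = c *s (M *v (x::'a::comm_ring_1^'k))"
  by (simp add: vec_eq_iff matrix_vector_mult_def sum_distrib_left algebra_simps)

lemma scaleR_as_s: "r *\<^sub>R (x::complex^'k) = complex_of_real r *s x"
  unfolding vec_eq_iff vector_scaleR_component vector_smult_component by (simp add: scaleR_conv_of_real)

lemma real_deriv_zero:
  fixes a c :: real
  assumes "\<forall>e. 2*e*a + e^2*c \<le> 0"
  shows "a = 0"
proof (rule ccontr)
  assume a: "a \<noteq> 0"
  define d where "d = \<bar>c\<bar> + 1"
  have d: "d > 0" by (simp add: d_def)
  have "2*(a/d)*a + (a/d)^2*c \<le> 0" using assms by blast
  moreover have "2*(a/d)*a + (a/d)^2*c = a^2 * (2*d + c) / d^2"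
    using d by (simp add: field_simps power2_eq_square)
  moreover have "a^2 * (2*d + c) / d^2 > 0"
    using a d by (intro divide_pos_pos mult_pos_pos) (auto simp: d_def)
  ultimately show False by linarith
qed

lemma quad_expand:
  assumes herm: "hermitian_mat M"
  shows "Re (cin (u + complex_of_real e *s w) (M *v (u + complex_of_real e *s w)))
     = Re (cin u (M *v u)) + 2*e*Re (cin w (M *v u)) + e^2 * Re (cin w (M *v w))"
proof -
  have h: "Re (cin u (M *v w)) = Re (cin w (M *v u))"
  proof -
    have "cin u (M *v w) = cnj (cin w (M *v u))"
      using herm_cin[OF herm, of u w] cin_cnj[of w "M *v u"] by simp
    then show ?thesis by simp
  qed
  show ?thesis
    by (simp add: matrix_vector_right_distrib mv_scale cin_add_left cin_add_right cin_scale_left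
        cin_scale_right h algebra_simps power2_eq_square)
qed

lemma norm_expand:
  "(norm (u + complex_of_real e *s w))^2 = (norm u)^2 + 2*e*Re (cin w u) + e^2 * (norm w)^2"
proof -
  have "complex_of_real ((norm (u + complex_of_real e *s w))^2)
     = cin (u + complex_of_real e *s w) (u + complex_of_real e *s w)"
    by (simp add: cin_self_norm)
  also have "\<dots> = cin u u + complex_of_real e * cin w u + complex_of_real e * cnj (cin w u)
       + complex_of_real e * complex_of_real e * cin w w"
    by (simp add: cin_add_left cin_add_right cin_scale_left cin_scale_right cin_cnj algebra_simps)
  finally have "(norm (u + complex_of_real e *s w))^2 = Re (cin u u + complex_of_real e * cin w u + complex_of_real e * cnj (cin w u)
       + complex_of_real e * complex_of_real e * cin w w)"
    by (metis Re_complex_of_real)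
  also have "\<dots> = (norm u)^2 + 2*e*Re (cin w u) + e^2 * (norm w)^2"
    by (simp add: cin_self_norm power2_eq_square)
  finally show ?thesis .
qed

lemma exists_eig_orth:
  fixes M :: "complex^'k^'k" and B :: "(complex^'k) set"
  assumes herm: "hermitian_mat M"
    and eigB: "\<forall>b\<in>B. \<exists>\<mu>. M *v b = complex_of_real \<mu> *s b"
    and x0: "x0 \<noteq> 0" "\<forall>b\<in>B. cin b x0 = 0"
  shows "\<exists>y \<mu>. y \<noteq> 0 \<and> (\<forall>b\<in>B. cin b y = 0) \<and> M *v y = complex_of_real \<mu> *s y"
proof -
  define W where "W = {x. \<forall>b\<in>B. cin b x = 0}"
  define Q where "Q = (\<lambda>x. Re (cin x (M *v x)))"
  have W_add: "x \<in> W \<Longrightarrow> y \<in> W \<Longrightarrow> x + y \<in> W" for x y by (simp add: W_def cin_add_right)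
  have W_scale: "x \<in> W \<Longrightarrow> c *s x \<in> W" for x c by (simp add: W_def cin_scale_right)
  have contcin: "continuous_on UNIV (\<lambda>x. cin b x)" for b
    unfolding cin_def by (intro continuous_intros)
  have closedW: "closed W"
  proof -
    have "W = (\<Inter>b\<in>B. {x. cin b x = 0})" by (auto simp: W_def)
    moreover have "closed {x. cin b x = 0}" for b
      by (rule closed_Collect_eq[OF contcin continuous_on_const])
    ultimately show ?thesis by auto
  qed
  have compK: "compact (W \<inter> sphere 0 1)"
    by (intro closed_Int_compact closedW compact_sphere)
  have x1: "(1/norm x0) *\<^sub>R x0 \<in> W \<inter> sphere 0 1"
  proof -
    have "(1/norm x0) *\<^sub>R x0 \<in> W" unfolding scaleR_as_s by (rule W_scale) (use x0 in \<open>simp add: W_def\<close>)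
    moreover have "norm ((1/norm x0) *\<^sub>R x0) = 1" using x0 by simp
    ultimately show ?thesis by simp
  qed
  have contQ: "continuous_on (W \<inter> sphere 0 1) Q"
    unfolding Q_def cin_def matrix_vector_mult_def by (intro continuous_intros)
  obtain y where y: "y \<in> W \<inter> sphere 0 1" and ymax: "\<forall>z\<in>W \<inter> sphere 0 1. Q z \<le> Q y"
    using continuous_attains_sup[OF compK _ contQ] x1 by blast
  define m where "m = Q y"
  have Qhom: "Q (complex_of_real r *s z) = r^2 * Q z" for r z
    by (simp add: Q_def mv_scale cin_scale_left cin_scale_right power2_eq_square)
  have bound: "Q z \<le> m * (norm z)^2" if z: "z \<in> W" for z
  proof (cases "z = 0")
    case True then show ?thesis by (simp add: Q_def)
  next
    case False
    define r where "r = 1 / norm z"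
    have "r *\<^sub>R z \<in> W" unfolding scaleR_as_s by (rule W_scale[OF z])
    moreover have "norm (r *\<^sub>R z) = 1" using False by (simp add: r_def)
    ultimately have "r *\<^sub>R z \<in> W \<inter> sphere 0 1" by simp
    then have "Q (complex_of_real r *s z) \<le> m" using ymax by (simp add: m_def scaleR_as_s)
    then have "r^2 * Q z \<le> m" by (simp add: Qhom)
    moreover have "r^2 * (norm z)^2 = 1" using False by (simp add: r_def power2_eq_square)
    ultimately have "r^2 * Q z \<le> m * (r^2 * (norm z)^2)" by simp
    moreover have "r^2 > 0" using False by (simp add: r_def)
    ultimately show ?thesis by (simp add: mult.left_commute)
  qed
  define w where "w = M *v y - complex_of_real m *s y"
  have deriv: "Re (cin z w) = 0" if z: "z \<in> W" for z
  proof -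
    have ny: "norm y = 1" using y by simp
    have "\<forall>e. 2*e*(Re (cin z (M *v y)) - m * Re (cin z y)) + e^2 * (Q z - m * (norm z)^2) \<le> 0"
    proof
      fix e
      have "y + complex_of_real e *s z \<in> W" using y z W_add W_scale by auto
      then have "Q (y + complex_of_real e *s z) \<le> m * (norm (y + complex_of_real e *s z))^2"
        by (rule bound)
      then show "2*e*(Re (cin z (M *v y)) - m * Re (cin z y)) + e^2 * (Q z - m * (norm z)^2) \<le> 0"
        unfolding Q_def quad_expand[OF herm] norm_expand using ny
        by (simp add: m_def Q_def algebra_simps)
    qed
    then have "Re (cin z (M *v y)) - m * Re (cin z y) = 0" by (rule real_deriv_zero)
    then show ?thesis by (simp add: w_def cin_diff_right cin_scale_right)
  qed
  have wW: "w \<in> W"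
  proof -
    have "cin b w = 0" if b: "b \<in> B" for b
    proof -
      obtain \<mu> where mu: "M *v b = complex_of_real \<mu> *s b" using eigB b by blast
      have "cin b (M *v y) = cin (M *v b) y" by (rule herm_cin[OF herm])
      also have "\<dots> = 0" using y b by (simp add: mu cin_scale_left W_def)
      finally show ?thesis using y b by (simp add: w_def cin_diff_right cin_scale_right W_def)
    qed
    then show ?thesis by (simp add: W_def)
  qed
  have "cin w w = 0"
  proof -
    have "Re (cin w w) = 0" by (rule deriv[OF wW])
    moreover have "Re (cin (\<i> *s w) w) = 0" by (rule deriv[OF W_scale[OF wW]])
    then have "Im (cin w w) = 0" by (simp add: cin_scale_left)
    ultimately show ?thesis by (simp add: complex_eq_iff)
  qed
  then have "w = 0" by (simp add: cin_self_eq_0)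
  then have "M *v y = complex_of_real m *s y" by (simp add: w_def)
  moreover have "y \<noteq> 0" using y by auto
  moreover have "\<forall>b\<in>B. cin b y = 0" using y by (simp add: W_def)
  ultimately show ?thesis by blast
qed

definition orthonormal :: "(complex^'k) set \<Rightarrow> bool" where
  "orthonormal B \<longleftrightarrow> (\<forall>b\<in>B. \<forall>c\<in>B. cin b c = (if b = c then 1 else 0))"

definition adjm :: "complex^'k^'k \<Rightarrow> complex^'k^'k" where
  "adjm U = (\<chi> i j. cnj (U$j$i))"

definition diagm :: "('k \<Rightarrow> real) \<Rightarrow> complex^'k^'k" where
  "diagm \<mu> = (\<chi> i j. if i = j then complex_of_real (\<mu> i) else 0)"

lemma cin_sum_right: "cin c (\<Sum>v\<in>B. f v) = (\<Sum>v\<in>B. cin c (f v))"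
  by (induct B rule: infinite_finite_induct) (simp_all add: cin_add_right)

lemma orth_sum_coeff:
  assumes "finite B" "orthonormal B" "c \<in> B"
  shows "cin c (\<Sum>v\<in>B. u v *s v) = u c"
proof -
  have "cin c (\<Sum>v\<in>B. u v *s v) = (\<Sum>v\<in>B. u v * cin c v)"
    by (simp add: cin_sum_right cin_scale_right)
  also have "\<dots> = (\<Sum>v\<in>B. if v = c then u v else 0)"
    using assms(2,3) by (intro sum.cong) (auto simp: orthonormal_def)
  also have "\<dots> = u c" using assms(1,3) by (simp add: sum.delta')
  finally show ?thesis .
qed

lemma orthonormal_independent:
  assumes "finite B" "orthonormal B"
  shows "vec.independent B"
proof -
  have "\<not> (\<exists>u. (\<exists>v\<in>B. u v \<noteq> 0) \<and> (\<Sum>v\<in>B. u v *s v) = 0)"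
  proof
    assume "\<exists>u. (\<exists>v\<in>B. u v \<noteq> 0) \<and> (\<Sum>v\<in>B. u v *s v) = 0"
    then obtain u v where v: "v \<in> B" "u v \<noteq> 0" and s: "(\<Sum>v\<in>B. u v *s v) = 0" by blast
    have "cin v (\<Sum>v\<in>B. u v *s v) = u v" by (rule orth_sum_coeff[OF assms v(1)])
    then show False using s v by simp
  qed
  then show ?thesis using vec.dependent_finite[OF assms(1)] by blast
qed

lemma exists_orth_vec:
  fixes B :: "(complex^'k) set"
  assumes fin: "finite B" and on: "orthonormal B" and card: "card B < CARD('k)"
  shows "\<exists>x. x \<noteq> 0 \<and> (\<forall>b\<in>B. cin b x = 0)"
proof -
  define P :: "complex^'k^'k" where "P = (\<chi> i j. \<Sum>b\<in>B. b$i * cnj (b$j))"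
  have Pv: "P *v x = (\<Sum>b\<in>B. cin b x *s b)" for x
  proof -
    have "(P *v x)$i = (\<Sum>b\<in>B. cin b x *s b)$i" for i
    proof -
      have "(P *v x)$i = (\<Sum>j\<in>UNIV. \<Sum>b\<in>B. b$i * cnj (b$j) * x$j)"
        by (simp add: P_def matrix_vector_mult_def sum_distrib_right)
      also have "\<dots> = (\<Sum>b\<in>B. \<Sum>j\<in>UNIV. b$i * cnj (b$j) * x$j)" by (rule sum.swap)
      also have "\<dots> = (\<Sum>b\<in>B. cin b x * b$i)"
        by (simp add: cin_def sum_distrib_left sum_distrib_right mult.commute mult.left_commute)
      also have "\<dots> = (\<Sum>b\<in>B. cin b x *s b)$i" by (simp add: sum_component)
      finally show ?thesis .
    qed
    then show ?thesis by (simp add: vec_eq_iff)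
  qed
  have "\<not> inj ((*v) P)"
  proof
    assume "inj ((*v) P)"
    then have "surj ((*v) P)"
      by (rule vec.linear_inj_imp_surj[OF matrix_vector_mul_linear_gen])
    have "UNIV \<subseteq> vec.span B"
    proof
      fix y :: "complex^'k" assume "y \<in> UNIV"
      obtain x where "y = P *v x" using \<open>surj ((*v) P)\<close> by (metis surjD)
      moreover have "(\<Sum>b\<in>B. cin b x *s b) \<in> vec.span B"
        by (intro vec.span_sum vec.span_scale) (rule vec.span_base)
      ultimately show "y \<in> vec.span B" by (simp add: Pv)
    qed
    then have "vec.dim (UNIV :: (complex^'k) set) \<le> card B" by (rule vec.dim_le_card[OF _ fin])
    then show False using card by (simp add: card_cart_basis)
  qed
  then obtain x1 x2 where x12: "x1 \<noteq> x2" "P *v x1 = P *v x2" unfolding inj_def by blast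
  define x where "x = x1 - x2"
  have x0: "x \<noteq> 0" using x12 by (simp add: x_def)
  have Px: "P *v x = 0" using x12 by (simp add: x_def matrix_vector_mult_diff_distrib)
  have "cin c x = 0" if c: "c \<in> B" for c
  proof -
    have "cin c (P *v x) = cin c x" unfolding Pv by (rule orth_sum_coeff[OF fin on c])
    then show ?thesis using Px by simp
  qed
  then show ?thesis using x0 by blast
qed

lemma spectral:
  fixes M :: "complex^'k^'k"
  assumes herm: "hermitian_mat M"
  shows "\<exists>U \<mu>. adjm U ** U = mat 1 \<and> U ** adjm U = mat 1 \<and> M = U ** diagm \<mu> ** adjm U"
proof -
  define G where "G = {B. finite B \<and> orthonormal B \<and> (\<forall>b\<in>B. \<exists>\<mu>. M *v b = complex_of_real \<mu> *s b)}"
  have bnd: "\<forall>B. B \<in> G \<longrightarrow> card B < CARD('k) + 1"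
  proof (intro allI impI)
    fix B assume "B \<in> G"
    then have "vec.independent B" using orthonormal_independent by (auto simp: G_def)
    then have "card B \<le> vec.dim (UNIV :: (complex^'k) set)"
      by (intro vec.independent_card_le_dim) auto
    then show "card B < CARD('k) + 1" by (simp add: card_cart_basis)
  qed
  have "{} \<in> G" by (simp add: G_def orthonormal_def)
  then obtain B where BG: "B \<in> G" and Bmax: "\<forall>B'. B' \<in> G \<longrightarrow> card B' \<le> card B"
    using Lattices_Big.ex_has_greatest_nat[of "\<lambda>B. B \<in> G" "{}" card "CARD('k) + 1"] bnd by blast
  from BG have fin: "finite B" and on: "orthonormal B"
    and eigB: "\<forall>b\<in>B. \<exists>\<mu>. M *v b = complex_of_real \<mu> *s b" by (auto simp: G_def)
  have cardB: "card B = CARD('k)"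
  proof (rule ccontr)
    assume "card B \<noteq> CARD('k)"
    then have "card B < CARD('k)" using bnd BG by auto
    then obtain x0 where "x0 \<noteq> 0" "\<forall>b\<in>B. cin b x0 = 0" using exists_orth_vec[OF fin on] by blast
    then obtain y \<mu> where y: "y \<noteq> 0" "\<forall>b\<in>B. cin b y = 0" "M *v y = complex_of_real \<mu> *s y"
      using exists_eig_orth[OF herm eigB] by blast
    define r where "r = 1 / norm y"
    define y' where "y' = complex_of_real r *s y"
    have ny: "norm y \<noteq> 0" using y by simp
    have y'y': "cin y' y' = 1"
    proof -
      have "cin y' y' = complex_of_real r * complex_of_real r * cin y y"
        by (simp add: y'_def cin_scale_left cin_scale_right)
      also have "\<dots> = complex_of_real (r * r * (norm y)^2)" by (simp add: cin_self_norm)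
      also have "r * r * (norm y)^2 = 1" using ny by (simp add: r_def power2_eq_square)
      finally show ?thesis by simp
    qed
    have y'orth: "\<forall>b\<in>B. cin b y' = 0" using y by (simp add: y'_def cin_scale_right)
    have y'eig: "M *v y' = complex_of_real \<mu> *s y'"
      using y by (simp add: y'_def mv_scale vector_smult_assoc mult.commute)
    have y'B: "y' \<notin> B" using y'orth y'y' by auto
    define B' where "B' = insert y' B"
    have "B' \<in> G"
    proof -
      have "orthonormal B'"
        unfolding orthonormal_def B'_def
      proof (intro ballI)
        fix b c assume b: "b \<in> insert y' B" and c: "c \<in> insert y' B"
        show "cin b c = (if b = c then 1 else 0)"
        proof (cases "b = y'")
          case True
          then show ?thesis
          proof (cases "c = y'")
            case True then show ?thesis using \<open>b = y'\<close> y'y' by simp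
          next
            case False
            then have "c \<in> B" using c by simp
            then have "cin c y' = 0" using y'orth by simp
            then have "cin y' c = 0" using cin_cnj[of c y'] by simp
            then show ?thesis using True False by simp
          qed
        next
          case False
          then have bB: "b \<in> B" using b by simp
          show ?thesis
          proof (cases "c = y'")
            case True then show ?thesis using bB y'orth y'B by auto
          next
            case False then show ?thesis using bB c on by (auto simp: orthonormal_def)
          qed
        qed
      qed
      then show ?thesis using fin eigB y'eig by (auto simp: G_def B'_def)
    qed
    moreover have "card B' = card B + 1" using fin y'B by (simp add: B'_def)
    ultimately show False using Bmax by fastforce
  qed
  obtain g where g: "bij_betw g (UNIV :: 'k set) B"
    using finite_same_card_bij[of "UNIV :: 'k set" B] fin cardB by auto
  have gB: "g j \<in> B" for j using g by (auto simp: bij_betw_def)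
  have ginj: "g j = g l \<longleftrightarrow> j = l" for j l using g by (auto simp: bij_betw_def inj_def)
  define \<mu> where "\<mu> j = (SOME m. M *v g j = complex_of_real m *s g j)" for j
  have eig: "M *v g j = complex_of_real (\<mu> j) *s g j" for j
    unfolding \<mu>_def by (rule someI_ex) (use eigB gB in blast)
  define U :: "complex^'k^'k" where "U = (\<chi> i j. g j $ i)"
  have UU: "adjm U ** U = mat 1"
  proof -
    have "(adjm U ** U)$j$l = (mat 1 :: complex^'k^'k)$j$l" for j l
    proof -
      have "(adjm U ** U)$j$l = cin (g j) (g l)"
        by (simp add: adjm_def U_def matrix_matrix_mult_def cin_def)
      also have "\<dots> = (if j = l then 1 else 0)"
        using on gB ginj by (simp add: orthonormal_def)
      finally show ?thesis by (simp add: mat_def)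
    qed
    then show ?thesis by (simp add: vec_eq_iff)
  qed
  then have UU': "U ** adjm U = mat 1" by (simp add: matrix_left_right_inverse)
  have MU: "M ** U = U ** diagm \<mu>"
  proof -
    have "(M ** U)$i$j = (U ** diagm \<mu>)$i$j" for i j
    proof -
      have "(M ** U)$i$j = (M *v g j)$i"
        by (simp add: U_def matrix_matrix_mult_def matrix_vector_mult_def)
      also have "\<dots> = complex_of_real (\<mu> j) * g j $ i" by (simp add: eig)
      also have "\<dots> = (U ** diagm \<mu>)$i$j"
        by (simp add: U_def diagm_def matrix_matrix_mult_def if_distrib cong: if_cong)
      finally show ?thesis .
    qed
    then show ?thesis by (simp add: vec_eq_iff)
  qed
  have "M = M ** (U ** adjm U)" by (simp add: UU')
  also have "\<dots> = U ** diagm \<mu> ** adjm U" by (simp add: matrix_mul_assoc MU)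
  finally show ?thesis using UU UU' by blast
qed

lemma decomp_entry:
  "(U ** diagm \<mu> ** adjm U)$i$j = (\<Sum>l\<in>UNIV. U$i$l * complex_of_real (\<mu> l) * cnj (U$j$l))"
  by (simp add: matrix_matrix_mult_def diagm_def adjm_def if_distrib if_distribR sum.delta' cong: if_cong)

lemma sum_swap3:
  "(\<Sum>i\<in>I. \<Sum>j\<in>J. \<Sum>l\<in>L. f i j l) = (\<Sum>l\<in>L. \<Sum>i\<in>I. \<Sum>j\<in>J. f i j l)"
proof -
  have "(\<Sum>i\<in>I. \<Sum>j\<in>J. \<Sum>l\<in>L. f i j l) = (\<Sum>i\<in>I. \<Sum>l\<in>L. \<Sum>j\<in>J. f i j l)"
    by (intro sum.cong refl sum.swap)
  also have "\<dots> = (\<Sum>l\<in>L. \<Sum>i\<in>I. \<Sum>j\<in>J. f i j l)" by (rule sum.swap)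
  finally show ?thesis .
qed

lemma Re_cnj_mult_self: "Re (cnj z * z) \<ge> 0"
  by (simp add: algebra_simps)

lemma psd_rank2:
  fixes M U :: "complex^'k^'k"
  assumes herm: "hermitian_mat M" and UU: "adjm U ** U = mat 1"
    and Mdec: "M = U ** diagm \<mu> ** adjm U"
    and nonneg: "\<forall>j. \<mu> j \<ge> 0" and S: "{j. \<mu> j \<noteq> 0} = {a, b}" and ab: "a \<noteq> b"
  shows "psd_mat M \<and> rank M = 2"
proof -
  have Me: "M$i$j = (\<Sum>l\<in>UNIV. U$i$l * complex_of_real (\<mu> l) * cnj (U$j$l))" for i j
    unfolding Mdec by (rule decomp_entry)
  have UUe: "(\<Sum>i\<in>UNIV. cnj (U$i$l) * U$i$m) = (if l = m then 1 else 0)" for l m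
  proof -
    have "(adjm U ** U)$l$m = (\<Sum>i\<in>UNIV. cnj (U$i$l) * U$i$m)"
      by (simp add: adjm_def matrix_matrix_mult_def)
    then show ?thesis using UU by (simp add: mat_def)
  qed
  \<comment> \<open>PSD\<close>
  have psd: "0 \<le> Re (\<Sum>i\<in>UNIV. \<Sum>j\<in>UNIV. cnj (x $ i) * M $ i $ j * x $ j)" for x :: "complex^'k"
  proof -
    define y where "y l = (\<Sum>j\<in>UNIV. cnj (U$j$l) * x$j)" for l
    have "(\<Sum>i\<in>UNIV. \<Sum>j\<in>UNIV. cnj (x $ i) * M $ i $ j * x $ j)
        = (\<Sum>i\<in>UNIV. \<Sum>j\<in>UNIV. \<Sum>l\<in>UNIV. complex_of_real (\<mu> l) * (cnj (x$i) * U$i$l) * (cnj (U$j$l) * x$j))"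
      by (simp add: Me sum_distrib_left sum_distrib_right mult_ac)
    also have "\<dots> = (\<Sum>l\<in>UNIV. \<Sum>i\<in>UNIV. \<Sum>j\<in>UNIV. complex_of_real (\<mu> l) * (cnj (x$i) * U$i$l) * (cnj (U$j$l) * x$j))"
      by (rule sum_swap3)
    also have "\<dots> = (\<Sum>l\<in>UNIV. complex_of_real (\<mu> l) * (cnj (y l) * y l))"
      by (simp add: y_def sum_distrib_left sum_distrib_right mult_ac)
    finally have eq: "(\<Sum>i\<in>UNIV. \<Sum>j\<in>UNIV. cnj (x $ i) * M $ i $ j * x $ j)
        = (\<Sum>l\<in>UNIV. complex_of_real (\<mu> l) * (cnj (y l) * y l))" .
    have "0 \<le> (\<Sum>l\<in>UNIV. \<mu> l * Re (cnj (y l) * y l))"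
      using nonneg Re_cnj_mult_self by (intro sum_nonneg mult_nonneg_nonneg) auto
    then show ?thesis unfolding eq by (simp add: Re_sum)
  qed
  \<comment> \<open>rank\<close>
  define w where "w l = (\<chi> j. cnj (U$j$l))" for l
  have mu_out: "\<mu> l = 0" if "l \<notin> {a,b}" for l using S that by auto
  have rows_in: "rows M \<subseteq> vec.span (w ` {a,b})"
  proof
    fix r assume "r \<in> rows M"
    then obtain i where r: "r = row i M" by (auto simp: rows_def)
    have "r = (\<Sum>l\<in>{a,b}. (U$i$l * complex_of_real (\<mu> l)) *s w l)"
    proof -
      have "r$j = (\<Sum>l\<in>{a,b}. (U$i$l * complex_of_real (\<mu> l)) *s w l)$j" for j
      proof -
        have "r$j = (\<Sum>l\<in>UNIV. U$i$l * complex_of_real (\<mu> l) * cnj (U$j$l))"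
          by (simp add: r row_def Me)
        also have "\<dots> = (\<Sum>l\<in>{a,b}. U$i$l * complex_of_real (\<mu> l) * cnj (U$j$l))"
          by (rule sum.mono_neutral_right) (auto simp: mu_out)
        also have "\<dots> = (\<Sum>l\<in>{a,b}. (U$i$l * complex_of_real (\<mu> l)) *s w l)$j"
          by (simp add: sum_component w_def)
        finally show ?thesis .
      qed
      then show ?thesis by (simp add: vec_eq_iff)
    qed
    moreover have "(\<Sum>l\<in>{a,b}. (U$i$l * complex_of_real (\<mu> l)) *s w l) \<in> vec.span (w ` {a,b})"
      by (intro vec.span_sum vec.span_scale) (auto intro: vec.span_base)
    ultimately show "r \<in> vec.span (w ` {a,b})" by simp
  qed
  have w_in: "w l \<in> vec.span (rows M)" if l: "l \<in> {a,b}" for l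
  proof -
    have mul: "\<mu> l \<noteq> 0" using S l by auto
    have "(\<Sum>i\<in>UNIV. cnj (U$i$l) *s row i M) = complex_of_real (\<mu> l) *s w l"
    proof -
      have "(\<Sum>i\<in>UNIV. cnj (U$i$l) *s row i M)$j = (complex_of_real (\<mu> l) *s w l)$j" for j
      proof -
        have "(\<Sum>i\<in>UNIV. cnj (U$i$l) *s row i M)$j
            = (\<Sum>i\<in>UNIV. \<Sum>m\<in>UNIV. cnj (U$i$l) * U$i$m * (complex_of_real (\<mu> m) * cnj (U$j$m)))"
          by (simp add: sum_component row_def Me sum_distrib_left mult_ac)
        also have "\<dots> = (\<Sum>m\<in>UNIV. \<Sum>i\<in>UNIV. cnj (U$i$l) * U$i$m * (complex_of_real (\<mu> m) * cnj (U$j$m)))"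
          by (rule sum.swap)
        also have "\<dots> = (\<Sum>m\<in>UNIV. (\<Sum>i\<in>UNIV. cnj (U$i$l) * U$i$m) * (complex_of_real (\<mu> m) * cnj (U$j$m)))"
          by (simp add: sum_distrib_right)
        also have "\<dots> = (\<Sum>m\<in>UNIV. if l = m then complex_of_real (\<mu> m) * cnj (U$j$m) else 0)"
          by (rule sum.cong[OF refl]) (simp add: UUe)
        also have "\<dots> = (complex_of_real (\<mu> l) *s w l)$j" by (simp add: w_def)
        finally show ?thesis .
      qed
      then show ?thesis by (simp add: vec_eq_iff)
    qed
    moreover have "(\<Sum>i\<in>UNIV. cnj (U$i$l) *s row i M) \<in> vec.span (rows M)"
      by (intro vec.span_sum vec.span_scale) (auto simp: rows_def intro: vec.span_base)
    ultimately have "complex_of_real (\<mu> l) *s w l \<in> vec.span (rows M)" by simp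
    then have "(1 / complex_of_real (\<mu> l)) *s (complex_of_real (\<mu> l) *s w l) \<in> vec.span (rows M)"
      by (rule vec.span_scale)
    then show ?thesis using mul by (simp add: vector_smult_assoc)
  qed
  have ww: "cin (w l) (w m) = (if l = m then 1 else 0)" for l m
  proof -
    have "cin (w l) (w m) = cnj (\<Sum>i\<in>UNIV. cnj (U$i$l) * U$i$m)"
      by (simp add: cin_def w_def mult.commute)
    then show ?thesis by (simp add: UUe)
  qed
  have wab: "w a \<noteq> w b" using ww[of a b] ww[of a a] ab by auto
  have on: "orthonormal (w ` {a,b})"
    unfolding orthonormal_def using ww ab by (auto simp: wab wab[symmetric])
  have ind: "vec.independent (w ` {a,b})" by (rule orthonormal_independent[OF _ on]) simp
  have card2: "card (w ` {a,b}) = 2" using wab by simp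
  have le: "vec.dim (rows M) \<le> 2"
    using vec.dim_le_card[OF rows_in] card2 by simp
  have ge: "2 \<le> vec.dim (rows M)"
  proof -
    have "card (w ` {a,b}) \<le> vec.dim (vec.span (rows M))"
      by (rule vec.independent_card_le_dim[OF _ ind]) (use w_in in auto)
    then show ?thesis using card2 by simp
  qed
  have "rank M = 2" unfolding row_rank_def_gen using le ge by simp
  moreover have "psd_mat M" unfolding psd_mat_def using herm psd by blast
  ultimately show ?thesis by simp
qed

lemma madd_rdistrib: "(B + C) ** (A::'a::semiring_1^'n^'m) = B ** A + C ** A"
  by (vector matrix_matrix_mult_def sum.distrib[symmetric] field_simps)

lemma scale_mid: "U ** (c *\<^sub>R X) ** W = c *\<^sub>R (U ** X ** (W::complex^'k^'k))"
  by (metis matrix_scalar_ac scalar_matrix_assoc)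

lemma conj_identity:
  fixes U X :: "complex^'k^'k"
  assumes "U ** adjm U = mat 1"
  shows "U ** (mat 1 + t *\<^sub>R X) ** adjm U = mat 1 + t *\<^sub>R (U ** X ** adjm U)"
proof -
  have "U ** (mat 1 + t *\<^sub>R X) ** adjm U = (U ** mat 1 + U ** (t *\<^sub>R X)) ** adjm U"
    by (simp only: matrix_add_ldistrib)
  also have "\<dots> = U ** adjm U + U ** (t *\<^sub>R X) ** adjm U"
    by (simp only: madd_rdistrib matrix_mul_rid)
  also have "\<dots> = mat 1 + t *\<^sub>R (U ** X ** adjm U)" using assms by (simp only: scale_mid)
  finally show ?thesis .
qed

lemma det_conj:
  fixes U X :: "complex^'k^'k"
  assumes "U ** adjm U = mat 1"
  shows "det (U ** X ** adjm U) = det X"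
proof -
  have "det (U ** X ** adjm U) = det X * (det U * det (adjm U))" by (simp add: det_mul)
  also have "det U * det (adjm U) = 1" using assms det_mul[of U "adjm U"] by simp
  finally show ?thesis by simp
qed

lemma det_diag_line:
  "det (mat 1 + t *\<^sub>R diagm \<mu>) = complex_of_real (\<Prod>j\<in>UNIV. 1 + t * \<mu> j)"
proof -
  have "det (mat 1 + t *\<^sub>R diagm \<mu>) = (\<Prod>j\<in>UNIV. (mat 1 + t *\<^sub>R diagm \<mu>)$j$j)"
    by (rule det_diagonal) (simp add: mat_def diagm_def)
  also have "\<dots> = (\<Prod>j\<in>UNIV. complex_of_real (1 + t * \<mu> j))"
    by (simp add: mat_def diagm_def of_real_def scaleR_left_distrib)
  finally show ?thesis by (simp add: of_real_prod)
qed

theorem mainTheorem6: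
  fixes A :: "real^'n^'n" and b :: "real^'n"
    and As :: "'n \<Rightarrow> complex^'k^'k"
  assumes symA: "transpose A = A"
    and A_nz: "A \<noteq> 0"
    and k_ge: "CARD('k) \<ge> 2"
    and herm: "\<forall>j. hermitian_mat (As j)"
    and det_rep: "\<forall>x::real^'n. complex_of_real (x \<bullet> (A *v x) + b \<bullet> x + 1)
                      = det (mat 1 + pencil As x)"
    and not_nsd: "\<not> (\<forall>x::real^'n. x \<bullet> (A *v x) \<le> 0)"
  shows "\<exists>v::real^'n. psd_mat (pencil As v) \<and> rank (pencil As v) = 2"
proof -
  obtain v where vpos: "v \<bullet> (A *v v) > 0" using not_nsd by (auto simp: not_le)
  define q where "q = v \<bullet> (A *v v)"
  define \<beta> where "\<beta> = b \<bullet> v"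
  define M where "M = pencil As v"
  have hc: "cnj (As l $ j $ i) = As l $ i $ j" for l i j
  proof -
    have "As l $ i $ j = cnj (As l $ j $ i)" using herm unfolding hermitian_mat_def by blast
    then show ?thesis by simp
  qed
  have pherm: "hermitian_mat (pencil As x)" for x
    unfolding hermitian_mat_def pencil_def by (simp add: sum_component cnj_sum hc)
  have pscale: "pencil As (t *\<^sub>R x) = t *\<^sub>R pencil As x" for t x
    unfolding pencil_def by (simp add: scaleR_sum_right)
  have Av: "A *v (t *\<^sub>R v) = t *\<^sub>R (A *v v)" for t :: real
    by (simp add: vec_eq_iff matrix_vector_mult_def sum_distrib_left algebra_simps)
  have detline: "det (mat 1 + t *\<^sub>R M) = complex_of_real (t*t*q + t*\<beta> + 1)" for t
  proof -
    have "(t *\<^sub>R v) \<bullet> (A *v (t *\<^sub>R v)) + b \<bullet> (t *\<^sub>R v) + 1 = t*t*q + t*\<beta> + 1"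
      by (simp add: Av q_def \<beta>_def)
    then show ?thesis using det_rep[rule_format, of "t *\<^sub>R v"] by (simp add: pscale M_def)
  qed
  obtain U \<mu> where UU: "adjm U ** U = mat 1" and UU': "U ** adjm U = mat 1"
    and Mdec: "M = U ** diagm \<mu> ** adjm U"
    using spectral[OF pherm[of v]] unfolding M_def by blast
  have ident: "(\<Prod>j\<in>UNIV. 1 + t * \<mu> j) = t*t*q + t*\<beta> + 1" for t
  proof -
    have "complex_of_real (\<Prod>j\<in>UNIV. 1 + t * \<mu> j) = det (mat 1 + t *\<^sub>R diagm \<mu>)"
      by (simp add: det_diag_line)
    also have "\<dots> = det (U ** (mat 1 + t *\<^sub>R diagm \<mu>) ** adjm U)" by (simp add: det_conj UU')
    also have "\<dots> = det (mat 1 + t *\<^sub>R M)" by (simp add: conj_identity UU' Mdec)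
    also have "\<dots> = complex_of_real (t*t*q + t*\<beta> + 1)" by (rule detline)
    finally show ?thesis by (simp only: of_real_eq_iff)
  qed
  define p where "p = (\<Prod>j\<in>UNIV. [:1, \<mu> j:])"
  have "poly p = poly [:1, \<beta>, q:]"
  proof
    fix t
    show "poly p t = poly [:1, \<beta>, q:] t"
      using ident[of t] by (simp add: p_def poly_prod algebra_simps)
  qed
  then have peq: "p = [:1, \<beta>, q:]" by (simp add: poly_eq_poly_eq_iff)
  have "degree p = (\<Sum>j\<in>UNIV. degree [:1, \<mu> j:])"
    unfolding p_def by (rule degree_prod_eq_sum_degree) simp
  also have "\<dots> = (\<Sum>j\<in>{j. \<mu> j \<noteq> 0}. degree [:1, \<mu> j:])"
    by (rule sum.mono_neutral_right) auto
  also have "\<dots> = card {j. \<mu> j \<noteq> 0}" by simp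
  finally have "card {j. \<mu> j \<noteq> 0} = 2" using peq vpos by (simp add: q_def)
  then obtain a c where S: "{j. \<mu> j \<noteq> 0} = {a, c}" and ac: "a \<noteq> c" by (auto simp: card_2_iff)
  have "p = (\<Prod>j\<in>{a,c}. [:1, \<mu> j:])"
    unfolding p_def by (rule prod.mono_neutral_right) (use S in \<open>auto simp: one_pCons\<close>)
  also have "\<dots> = [:1, \<mu> a + \<mu> c, \<mu> a * \<mu> c:]" using ac by (simp add: algebra_simps)
  finally have "\<mu> a * \<mu> c = q" using peq by simp
  then have prodpos: "\<mu> a * \<mu> c > 0" using vpos by (simp add: q_def)
  have mu_out: "\<mu> j = 0" if "j \<notin> {a,c}" for j using S that by auto
  show ?thesis
  proof (cases "\<mu> a > 0")
    case True
    then have "\<mu> c > 0" using prodpos by (simp add: zero_less_mult_iff)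
    then have nn: "\<forall>j. \<mu> j \<ge> 0" using True mu_out by (metis insert_iff less_imp_le order_refl singletonD)
    have "psd_mat M \<and> rank M = 2"
      by (rule psd_rank2[OF _ UU Mdec nn S ac]) (simp add: M_def pherm)
    then show ?thesis unfolding M_def by blast
  next
    case False
    then have a_neg: "\<mu> a < 0" using prodpos by (cases "\<mu> a = 0") auto
    then have "\<mu> c < 0" using prodpos by (simp add: zero_less_mult_iff)
    then have nn: "\<forall>j. - \<mu> j \<ge> 0" using a_neg mu_out by (metis insert_iff less_imp_le neg_0_le_iff_le order_refl singletonD)
    have S': "{j. - \<mu> j \<noteq> 0} = {a, c}" using S by simp
    have dneg: "diagm (\<lambda>j. - \<mu> j) = (-1) *\<^sub>R diagm \<mu>"
      by (simp add: vec_eq_iff diagm_def)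
    have Mdec': "pencil As ((-1) *\<^sub>R v) = U ** diagm (\<lambda>j. - \<mu> j) ** adjm U"
      by (simp only: pscale dneg scale_mid M_def[symmetric] Mdec)
    have "psd_mat (pencil As ((-1) *\<^sub>R v)) \<and> rank (pencil As ((-1) *\<^sub>R v)) = 2"
      by (rule psd_rank2[OF pherm UU Mdec' nn S' ac])
    then show ?thesis by blast
  qed
qed

end
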